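(* Let $s>0$ and let $Z$ be a random variable that under $\mathbb{Q}$ has mean $0$, variance $1$ and a density $f_Z^{\mathbb{Q}}$ with $f_Z^{\mathbb{Q}}(x)>0$ for all $x\in\mathbb{R}$. Let $S_T=S_0e^{(r+\omega)T+s\sqrt{T}Z}$ where $\omega\in\mathbb{R}$ is such that $e^{-rT}E_{\mathbb{Q}}[S_T]=S_0$. Let $h^*>0$ and let $\mathcal{H}\subset[h^*,\infty)$ with $h^*\in\mathcal{H}$ and $E_{\mathbb{Q}}[S_T^h]<\infty$ for all $h\in\mathcal{H}$. For $h\in\mathcal{H}$ define $\mathbb{P}^h$ by $\frac{d\mathbb{P}^h}{d\mathbb{Q}}=\frac{S_T^h}{E_{\mathbb{Q}}[S_T^h]}$, and let $\mathcal{P}=\{\mathbb{P}^h:h\in\mathcal{H}\}$. Then $F^{\mathbb{P}^{h^*}}_{S_T}\preceq_{\mathbb{F}_{FSD}}F^{\mathbb{P}^h}_{S_T}$ (hence also $\preceq_{\mathbb{F}_{SSD}}$) for all $h\in\mathcal{H}$, $\mathbb{P}^{h^*}$ is a least favorable measure with respect to $\mathbb{F}_{FSD}$, and $\ell^{\mathbb{P}^{h^*}}$ is continuously distributed under $\mathbb{P}^{h^*}$. If moreover $h^*\in(0,1]$, then $\mathbb{P}^{h^*}$ is also a least favorable measure with respect to $\mathbb{F}_{SSD}$.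
   Context: Standing setting: fix $T>0$, $r\in\mathbb{R}$, $S_0>0$, and write $\mathbb{R}_+=[0,\infty)$; $\mathcal{F}=\sigma(S_T)$. For $\mathbb{P}\in\mathcal{P}$, $\ell^{\mathbb{P}}=d\mathbb{P}/d\mathbb{Q}$; $F_X^{\mathbb{P}}$ is the cdf of $X$ under $\mathbb{P}$. For a set $\mathbb{F}$ of measurable functions $\mathbb{R}_+\to\mathbb{R}$ and cdfs $F,G$ on $\mathbb{R}_+$, $F\preceq_{\mathbb{F}}G$ means $\int f\,dF\le\int f\,dG$ for all $f\in\mathbb{F}$ with finite integrals. $\mathbb{F}_{FSD}$ is the set of all non-decreasing functions $\mathbb{R}_+\to\mathbb{R}$; $\mathbb{F}_{SSD}$ is the set of all non-decreasing concave functions $\mathbb{R}_+\to\mathbb{R}$. A measure $\mathbb{P}^*\in\mathcal{P}$ with $\ell^*=d\mathbb{P}^*/d\mathbb{Q}$ is least favorable w.r.t. $\mathbb{F}$ if $F_{\ell^*}^{\mathbb{P}^*}\preceq_{\mathbb{F}}F_{\ell^*}^{\mathbb{P}}$ for all $\mathbb{P}\in\mathcal{P}$. *)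

theory Defs
  imports "HOL-Probability.Probability"
begin

definition stoch_le :: "(real \<Rightarrow> real) set \<Rightarrow> real measure \<Rightarrow> real measure \<Rightarrow> bool" where
  "stoch_le FF \<mu> \<nu> \<longleftrightarrow>
     (\<forall>f\<in>FF. integrable \<mu> f \<and> integrable \<nu> f \<longrightarrow> (\<integral>x. f x \<partial>\<mu>) \<le> (\<integral>x. f x \<partial>\<nu>))"

definition F_FSD :: "(real \<Rightarrow> real) set" where
  "F_FSD = {f. mono_on {0..} f}"

definition F_SSD :: "(real \<Rightarrow> real) set" where
  "F_SSD = {f. mono_on {0..} f \<and> concave_on {0..} f}"

definition lik :: "'a measure \<Rightarrow> 'a measure \<Rightarrow> 'a \<Rightarrow> real" where
  "lik Q P = (\<lambda>x. enn2real (RN_deriv Q P x))"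

definition least_favorable ::
  "(real \<Rightarrow> real) set \<Rightarrow> 'a measure set \<Rightarrow> 'a measure \<Rightarrow> 'a measure \<Rightarrow> bool" where
  "least_favorable FF Pset Q Pstar \<longleftrightarrow> Pstar \<in> Pset \<and>
     (\<forall>P\<in>Pset. stoch_le FF (distr Pstar borel (lik Q Pstar)) (distr P borel (lik Q Pstar)))"

definition esscher :: "'a measure \<Rightarrow> ('a \<Rightarrow> real) \<Rightarrow> real \<Rightarrow> 'a measure" where
  "esscher Q ST h = density Q (\<lambda>x. ennreal (ST x powr h / (\<integral>y. ST y powr h \<partial>Q)))"

end

theory Submission
  imports Defs
begin

lemma stoch_le_anti: "stoch_le A \<mu> \<nu> \<Longrightarrow> B \<subseteq> A \<Longrightarrow> stoch_le B \<mu> \<nu>"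
  unfolding stoch_le_def by blast

lemma SSD_FSD: "F_SSD \<subseteq> F_FSD"
  unfolding F_SSD_def F_FSD_def by auto

lemma core:
  fixes Q :: "'a measure" and S :: "'a \<Rightarrow> real" and f :: "real \<Rightarrow> real"
  assumes Q: "prob_space Q" and Sm: "S \<in> borel_measurable Q" and Spos: "\<forall>x. S x > 0"
    and a: "0 < a" and ab: "a \<le> b"
    and ia: "integrable Q (\<lambda>x. S x powr a)" and ib: "integrable Q (\<lambda>x. S x powr b)"
    and f: "mono_on {0..} f"
    and ifa: "integrable Q (\<lambda>x. S x powr a / (\<integral>y. S y powr a \<partial>Q) * f (S x))"
    and ifb: "integrable Q (\<lambda>x. S x powr b / (\<integral>y. S y powr b \<partial>Q) * f (S x))"
  shows "(\<integral>x. S x powr a / (\<integral>y. S y powr a \<partial>Q) * f (S x) \<partial>Q)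
       \<le> (\<integral>x. S x powr b / (\<integral>y. S y powr b \<partial>Q) * f (S x) \<partial>Q)"
proof -
  interpret prob_space Q by fact
  have pos: "(\<integral>y. S y powr c \<partial>Q) > 0" if "integrable Q (\<lambda>x. S x powr c)" for c
  proof -
    have "(\<integral>y. S y powr c \<partial>Q) \<ge> 0" by (intro integral_nonneg_AE) auto
    moreover have "(\<integral>y. S y powr c \<partial>Q) \<noteq> 0"
    proof
      assume "(\<integral>y. S y powr c \<partial>Q) = 0"
      then have "AE x in Q. S x powr c = 0"
        using integral_nonneg_eq_0_iff_AE[OF that] by auto
      then have "AE x in Q. False" by (rule eventually_mono) (metis Spos less_irrefl powr_eq_0_iff)
      then show False by simp
    qed
    ultimately show ?thesis by linarith
  qed
  define A where "A = (\<integral>y. S y powr a \<partial>Q)"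
  define B where "B = (\<integral>y. S y powr b \<partial>Q)"
  have A: "A > 0" using pos[OF ia] by (simp add: A_def)
  have B: "B > 0" using pos[OF ib] by (simp add: B_def)
  show ?thesis
  proof (cases "a = b")
    case True then show ?thesis by simp
  next
    case False
    define d where "d = b - a"
    have d: "d > 0" using False ab by (simp add: d_def)
    define s0 where "s0 = (B / A) powr (1 / d)"
    have s0: "s0 > 0" using A B by (simp add: s0_def)
    have s0d: "s0 powr d = B / A" using A B d by (simp add: s0_def powr_powr)
    have pw: "(S x powr b / B - S x powr a / A) * (f (S x) - f s0) \<ge> 0" for x
    proof -
      have Sx: "S x > 0" using Spos by auto
      have sb: "S x powr b = S x powr a * S x powr d" by (simp add: d_def powr_add[symmetric])
      have e: "S x powr b / B - S x powr a / A = S x powr a * (S x powr d / B - 1 / A)"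
        by (simp add: sb field_simps)
      show ?thesis
      proof (cases "S x \<ge> s0")
        case True
        have "S x powr d \<ge> B / A" using s0d powr_mono2[of d s0 "S x"] True d s0 by simp
        then have "S x powr d / B - 1 / A \<ge> 0" using A B by (simp add: field_simps)
        moreover have "f (S x) - f s0 \<ge> 0" using f True s0 by (auto simp: mono_on_def)
        ultimately show ?thesis unfolding e by simp
      next
        case False
        have "S x powr d < B / A" using s0d powr_less_mono2[of d "S x" s0] False d Sx by simp
        then have "S x powr d / B - 1 / A \<le> 0" using A B by (simp add: field_simps)
        moreover have "f (S x) - f s0 \<le> 0" using f False Sx by (auto simp: mono_on_def)
        ultimately have "0 \<le> (S x powr d / B - 1 / A) * (f (S x) - f s0)"
          by (simp add: mult_nonpos_nonpos)
        then show ?thesis unfolding e by (simp add: mult.assoc)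
      qed
    qed
    have eq: "(\<lambda>x. (S x powr b / B - S x powr a / A) * (f (S x) - f s0)) =
       (\<lambda>x. (S x powr b / B * f (S x) - S x powr a / A * f (S x)) - f s0 * (S x powr b / B - S x powr a / A))"
      by (rule ext) (simp add: algebra_simps add_divide_distrib diff_divide_distrib)
    have ib': "integrable Q (\<lambda>x. S x powr b / B)" using ib by simp
    have ia': "integrable Q (\<lambda>x. S x powr a / A)" using ia by simp
    have "0 \<le> (\<integral>x. (S x powr b / B - S x powr a / A) * (f (S x) - f s0) \<partial>Q)"
      using pw by (intro integral_nonneg_AE) auto
    also have "\<dots> = (\<integral>x. S x powr b / B * f (S x) \<partial>Q) - (\<integral>x. S x powr a / A * f (S x) \<partial>Q)
        - f s0 * ((\<integral>x. S x powr b / B \<partial>Q) - (\<integral>x. S x powr a / A \<partial>Q))"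
      unfolding eq using ifa ifb ia' ib' unfolding A_def[symmetric] B_def[symmetric]
      by (simp add: Bochner_Integration.integral_diff)
    also have "(\<integral>x. S x powr b / B \<partial>Q) = 1" using B by (simp add: B_def)
    also have "(\<integral>x. S x powr a / A \<partial>Q) = 1" using A by (simp add: A_def)
    finally show ?thesis unfolding A_def B_def by simp
  qed
qed
theorem mainTheorem7:
  fixes Q :: "'a measure" and Z :: "'a \<Rightarrow> real" and fZ :: "real \<Rightarrow> real"
    and T r S0 s \<omega> hstar :: real and H :: "real set" and ST :: "'a \<Rightarrow> real"
  assumes T: "T > 0" and S0: "S0 > 0" and s: "s > 0"
    and Q: "prob_space Q"
    and Zdens: "distributed Q lborel Z (\<lambda>x. ennreal (fZ x))"
    and fZpos: "\<forall>x. fZ x > 0"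
    and Zint: "integrable Q Z"
    and Zmean: "prob_space.expectation Q Z = 0"
    and Zvar: "prob_space.variance Q Z = 1"
    and ST_def: "ST = (\<lambda>x. S0 * exp ((r + \<omega>) * T + s * sqrt T * Z x))"
    and ST_int: "integrable Q ST"
    and omega: "exp (- r * T) * prob_space.expectation Q ST = S0"
    and hstar: "hstar > 0"
    and H_sub: "H \<subseteq> {hstar..}" and hstar_in: "hstar \<in> H"
    and H_int: "\<forall>h\<in>H. integrable Q (\<lambda>x. ST x powr h)"
  shows "(\<forall>h\<in>H. stoch_le F_FSD (distr (esscher Q ST hstar) borel ST)
                              (distr (esscher Q ST h) borel ST))
       \<and> (\<forall>h\<in>H. stoch_le F_SSD (distr (esscher Q ST hstar) borel ST)
                              (distr (esscher Q ST h) borel ST))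
       \<and> least_favorable F_FSD (esscher Q ST ` H) Q (esscher Q ST hstar)
       \<and> (\<forall>x. isCont (cdf (distr (esscher Q ST hstar) borel (lik Q (esscher Q ST hstar)))) x)
       \<and> (hstar \<le> 1 \<longrightarrow> least_favorable F_SSD (esscher Q ST ` H) Q (esscher Q ST hstar))"
proof -
  interpret Qp: prob_space Q by fact
  have Zm: "Z \<in> borel_measurable Q"
    using distributed_measurable[OF Zdens] by simp
  have STm: "ST \<in> borel_measurable Q" unfolding ST_def using Zm by measurable
  have STpos: "\<forall>x. ST x > 0" unfolding ST_def using S0 by simp
  define E where "E h = (\<integral>y. ST y powr h \<partial>Q)" for h
  define g where "g h x = ST x powr h / E h" for h x
  have gm: "g h \<in> borel_measurable Q" for h unfolding g_def using STm by measurable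
  have gnn: "g h x \<ge> 0" for h x unfolding g_def E_def
    by (intro divide_nonneg_nonneg integral_nonneg_AE) auto
  have ess: "esscher Q ST h = density Q (\<lambda>x. ennreal (g h x))" for h
    by (simp add: esscher_def g_def E_def)
  have conv: "integrable Q (\<lambda>x. g h x * F (Y x))
     \<and> (\<integral>x. F x \<partial>distr (esscher Q ST h) borel Y) = (\<integral>x. g h x * F (Y x) \<partial>Q)"
    if Ym: "Y \<in> borel_measurable Q" and i: "integrable (distr (esscher Q ST h) borel Y) F" for h Y F
  proof
    have Ym': "Y \<in> measurable (esscher Q ST h) borel" using Ym by (simp add: ess)
    have Fm: "F \<in> borel_measurable borel" using i by auto
    have "integrable (esscher Q ST h) (\<lambda>x. F (Y x))" using i integrable_distr_eq[OF Ym' Fm] by simp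
    then show "integrable Q (\<lambda>x. g h x * F (Y x))" unfolding ess
      using integrable_density[of "\<lambda>x. F (Y x)" Q "g h"] gm gnn Fm Ym by simp
    show "(\<integral>x. F x \<partial>distr (esscher Q ST h) borel Y) = (\<integral>x. g h x * F (Y x) \<partial>Q)"
      using integral_distr[OF Ym' Fm] integral_density[of "\<lambda>x. F (Y x)" Q "g h"] gm gnn Fm Ym
      unfolding ess by simp
  qed
  have hle: "hstar \<le> h" if "h \<in> H" for h using H_sub that by auto
  have Hi: "integrable Q (\<lambda>x. ST x powr h)" if "h \<in> H" for h using H_int that by auto
  have fsd: "stoch_le F_FSD (distr (esscher Q ST hstar) borel ST) (distr (esscher Q ST h) borel ST)"
    if hH: "h \<in> H" for h
    unfolding stoch_le_def
  proof (intro ballI impI, elim conjE)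
    fix f assume fF: "f \<in> F_FSD"
      and i1: "integrable (distr (esscher Q ST hstar) borel ST) f"
      and i2: "integrable (distr (esscher Q ST h) borel ST) f"
    note c1 = conv[OF STm i1] and c2 = conv[OF STm i2]
    have "(\<integral>x. g hstar x * f (ST x) \<partial>Q) \<le> (\<integral>x. g h x * f (ST x) \<partial>Q)"
      using core[OF Q STm STpos hstar hle[OF hH] Hi[OF hstar_in] Hi[OF hH], of f] fF c1 c2
      unfolding g_def E_def F_FSD_def by simp
    then show "(\<integral>x. f x \<partial>distr (esscher Q ST hstar) borel ST) \<le> (\<integral>x. f x \<partial>distr (esscher Q ST h) borel ST)"
      using c1 c2 by simp
  qed
  have likAE: "AE x in Q. lik Q (esscher Q ST hstar) x = g hstar x"
  proof -
    have "AE x in Q. ennreal (g hstar x) = RN_deriv Q (esscher Q ST hstar) x"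
      by (rule Qp.RN_deriv_unique) (use gm in \<open>auto simp: ess\<close>)
    then show ?thesis by (rule eventually_mono) (metis lik_def enn2real_ennreal gnn)
  qed
  have likm: "lik Q (esscher Q ST hstar) \<in> borel_measurable Q" unfolding lik_def by measurable
  have distr_lik: "distr (esscher Q ST h) borel (lik Q (esscher Q ST hstar)) = distr (esscher Q ST h) borel (g hstar)" for h
  proof (rule distr_cong_AE)
    obtain L where L: "L = lik Q (esscher Q ST hstar)" by simp
    have "AE x in density Q (\<lambda>x. ennreal (g h x)). L x = g hstar x"
      using likAE gm unfolding L[symmetric] by (subst AE_density) (auto elim: AE_mp)
    then show "AE x in esscher Q ST h. lik Q (esscher Q ST hstar) x = g hstar x"
      unfolding L ess .
    show "lik Q (esscher Q ST hstar) \<in> measurable (esscher Q ST h) borel" using likm by (simp add: ess)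
    show "g hstar \<in> measurable (esscher Q ST h) borel" using gm by (simp add: ess)
  qed auto
  have E0: "E hstar \<ge> 0" unfolding E_def by (intro integral_nonneg_AE) auto
  have lf: "least_favorable F_FSD (esscher Q ST ` H) Q (esscher Q ST hstar)"
    unfolding least_favorable_def
  proof (intro conjI ballI)
    show "esscher Q ST hstar \<in> esscher Q ST ` H" using hstar_in by auto
    fix P assume "P \<in> esscher Q ST ` H"
    then obtain h where hH: "h \<in> H" and P: "P = esscher Q ST h" by auto
    show "stoch_le F_FSD (distr (esscher Q ST hstar) borel (lik Q (esscher Q ST hstar)))
        (distr P borel (lik Q (esscher Q ST hstar)))"
      unfolding P distr_lik stoch_le_def
    proof (intro ballI impI, elim conjE)
      fix f assume fF: "f \<in> F_FSD"
        and i1: "integrable (distr (esscher Q ST hstar) borel (g hstar)) f"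
        and i2: "integrable (distr (esscher Q ST h) borel (g hstar)) f"
      note c1 = conv[OF gm i1] and c2 = conv[OF gm i2]
      have mono: "mono_on {0..} (\<lambda>y. f (y powr hstar / E hstar))"
      proof (rule mono_onI)
        fix x y :: real assume "x \<in> {0..}" "y \<in> {0..}" "x \<le> y"
        moreover have "x powr hstar / E hstar \<le> y powr hstar / E hstar"
          using calculation E0 hstar by (intro divide_right_mono powr_mono2) auto
        moreover have "0 \<le> x powr hstar / E hstar" using E0 by simp
        ultimately show "f (x powr hstar / E hstar) \<le> f (y powr hstar / E hstar)"
          using fF unfolding F_FSD_def mono_on_def by (simp add: order_trans)
      qed
      have "(\<integral>x. g hstar x * f (g hstar x) \<partial>Q) \<le> (\<integral>x. g h x * f (g hstar x) \<partial>Q)"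
        using core[OF Q STm STpos hstar hle[OF hH] Hi[OF hstar_in] Hi[OF hH] mono] c1 c2
        unfolding g_def E_def by simp
      then show "(\<integral>x. f x \<partial>distr (esscher Q ST hstar) borel (g hstar)) \<le> (\<integral>x. f x \<partial>distr (esscher Q ST h) borel (g hstar))"
        using c1 c2 by simp
    qed
  qed
  have cont: "isCont (cdf (distr (esscher Q ST hstar) borel (lik Q (esscher Q ST hstar)))) c" for c
  proof -
    let ?P = "esscher Q ST hstar"
    let ?M = "distr ?P borel (lik Q ?P)"
    have Eh: "E hstar > 0"
    proof -
      have "E hstar \<noteq> 0"
      proof
        assume "E hstar = 0"
        then have "AE x in Q. ST x powr hstar = 0"
          using integral_nonneg_eq_0_iff_AE[OF Hi[OF hstar_in]] unfolding E_def by auto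
        then have "AE x in Q. False" by (rule eventually_mono) (metis STpos less_irrefl powr_eq_0_iff)
        then show False by simp
      qed
      then show ?thesis using E0 by simp
    qed
    have Pprob: "prob_space ?P"
    proof (rule prob_spaceI)
      have "emeasure ?P (space ?P) = (\<integral>\<^sup>+x. ennreal (g hstar x) \<partial>Q)"
        unfolding ess using gm by (simp add: emeasure_density)
      also have "\<dots> = ennreal (\<integral>x. g hstar x \<partial>Q)"
        using Hi[OF hstar_in] gnn by (intro nn_integral_eq_integral) (auto simp: g_def)
      also have "(\<integral>x. g hstar x \<partial>Q) = 1" using Eh by (simp add: g_def E_def)
      finally show "emeasure ?P (space ?P) = 1" by simp
    qed
    have likmP: "lik Q ?P \<in> measurable ?P borel" using likm by (simp add: ess)
    have "prob_space ?M" by (rule prob_space.prob_space_distr[OF Pprob likmP])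
    then have "real_distribution ?M"
      unfolding real_distribution_def real_distribution_axioms_def by simp
    then interpret MP: real_distribution ?M .
    define \<psi> where "\<psi> z = (S0 * exp ((r + \<omega>) * T + s * sqrt T * z)) powr hstar / E hstar" for z
    have g\<psi>: "g hstar x = \<psi> (Z x)" for x by (simp add: g_def \<psi>_def ST_def)
    have inj: "z1 = z2" if "\<psi> z1 = \<psi> z2" for z1 z2
    proof -
      have "(S0 * exp ((r + \<omega>) * T + s * sqrt T * z1)) powr hstar
          = (S0 * exp ((r + \<omega>) * T + s * sqrt T * z2)) powr hstar"
        using that Eh by (simp add: \<psi>_def)
      then have "((S0 * exp ((r + \<omega>) * T + s * sqrt T * z1)) powr hstar) powr (1/hstar)
          = ((S0 * exp ((r + \<omega>) * T + s * sqrt T * z2)) powr hstar) powr (1/hstar)" by simp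
      then have "S0 * exp ((r + \<omega>) * T + s * sqrt T * z1) = S0 * exp ((r + \<omega>) * T + s * sqrt T * z2)"
        using hstar S0 by (simp add: powr_powr)
      then have "s * sqrt T * z1 = s * sqrt T * z2" using S0 by simp
      then show ?thesis using s T by simp
    qed
    have AEZ: "AE x in Q. \<psi> (Z x) \<noteq> c"
    proof (cases "\<exists>z0. \<psi> z0 = c")
      case False then show ?thesis by auto
    next
      case True
      then obtain z0 where z0: "\<psi> z0 = c" by auto
      have "AE z in distr Q lborel Z. z \<noteq> z0"
        unfolding distributed_distr_eq_density[OF Zdens]
        using AE_lborel_singleton[of z0] distributed_borel_measurable[OF Zdens] by (subst AE_density) (auto elim: AE_mp)
      then have "AE x in Q. Z x \<noteq> z0"
        using Zm by (subst (asm) AE_distr_iff) auto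
      then show ?thesis by (rule eventually_mono) (use z0 inj in blast)
    qed
    have "AE x in Q. lik Q ?P x \<noteq> c"
      using likAE AEZ by eventually_elim (simp add: g\<psi>)
    moreover obtain L where L: "L = lik Q ?P" by simp
    ultimately have "AE x in density Q (\<lambda>x. ennreal (g hstar x)). L x \<noteq> c"
      using gm by (subst AE_density) (auto elim: AE_mp)
    then have "AE x in ?P. lik Q ?P x \<noteq> c"
      unfolding L ess .
    then have "emeasure ?P (lik Q ?P -` {c} \<inter> space ?P) = 0"
      using likmP by (subst (asm) AE_iff_measurable[OF _ refl]) (auto simp: vimage_def Int_def conj_commute)
    then have "measure ?M {c} = 0"
      using likmP by (simp add: emeasure_distr measure_def)
    then show ?thesis using MP.isCont_cdf by simp
  qed
  show ?thesis
    using fsd stoch_le_anti[OF fsd SSD_FSD] lf cont stoch_le_anti[OF _ SSD_FSD]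
    unfolding least_favorable_def by blast
qed

end
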